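(* Consider the principal–agent model described in the context, and define \[ \mathcal{J} \;=\; \left\{ (a,u)\;\middle|\; a>0,\ u\ge u_0,\ \sup_{x\in(L(a),\bar x]} \frac{f_a(x\mid a)}{f(x\mid a)} \;\ge\; \frac{c'(a)}{c(a)+u}\right\} \;\cup\; \{(0,u)\mid u\ge u_0\}. \] Then: (1) Every implementable effort–utility pair belongs to $\mathcal{J}$, i.e. $\mathcal{I}\subseteq\mathcal{J}$, where $\mathcal{I}$ is the implementable set. (2) There exists $(a,u)\in\mathcal{J}$ that solves \[ \max_{(a,u)\in\mathcal{J}} \Big\{ \mathbb{E}[X(a)\mid a]-c(a)-u \Big\}. \qquad (\ast) \] (3) If $(a^{\mathcal J},u^{\mathcal J})$ is a maximizer of $(\ast)$, then any contract that implements $(a^{\mathcal J},u^{\mathcal J})$ is an optimal solution of the principal's original problem (OP).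
   Context: Model. An agent chooses effort $a\ge 0$. The outcome $X(a)$ is a continuous random variable with support $[L(a),\bar x]$, where $\bar x>0$ is fixed (possibly $+\infty$) and $L:[0,\infty)\to[0,\bar x)$ is nondecreasing on $[0,\infty)$ and continuously differentiable on $(0,\infty)$. Effort costs $c(a)$, where $c:[0,\infty)\to[0,\infty)$ is twice differentiable with $c'(a)>0$, $c''(a)\ge 0$ for all $a\ge0$. $X(a)$ has density $f(x\mid a)$ and cdf $F(x\mid a)$; for each fixed $x\in(L(a),\bar x]$, $f(x\mid a)$ and $F(x\mid a)$ are differentiable in $a>0$ with derivatives $f_a,F_a$, both continuous on $(L(a),\bar x]\times(0,\infty)$, and $F_a<0$ there. A contract is a function $s:\mathbb{R}_{\ge0}\to\mathbb{R}_{\ge0}$ (limited liability, LL: $s(x)\ge0$ for all $x\ge0$). The principal's expected utility is $E^P(a,s)=\int_{L(a)}^{\bar x}[x-s(x)]f(x\mid a)\,dx$ and the agent's is $E^A(a,s)=\int_{L(a)}^{\bar x}s(x)f(x\mid a)\,dx-c(a)$. The agent has reservation utility $u_0\ge0$. The original problem (OP) is: maximize $E^P(a_s,s)$ over $(a_s,s)$ subject to (IC) $a_s\in\arg\max_{a\ge0}E^A(a,s)$, (IR) $E^A(a_s,s)\ge u_0$, and (LL). When the agent is indifferent among several efforts, he chooses the one most favorable to the principal. Standing assumption: (i) for all $a\ge0$, $\mathbb{E}[X(a)\mid a]<\infty$ and $a\mapsto\mathbb{E}[X(a)\mid a]$ is continuous on $[0,\infty)$; (ii) $\lim_{a\to\infty}\{\mathbb{E}[X(a)\mid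 a]-c(a)\}=-\infty$; (iii) $a\mapsto\sup_{x\in(L(a),\bar x]} f_a(x\mid a)/f(x\mid a)$ is continuous on $(0,\infty)$; (iv) for any contract $s$ with $\mathbb{E}[s(X(a))\mid a]<\infty$, $\lim_{h\uparrow0}\int_{L(a)}^{\bar x}\frac{f(x\mid a+h)-f(x\mid a)}{h}s(x)\,dx=\int_{L(a)}^{\bar x}\lim_{h\uparrow0}\frac{f(x\mid a+h)-f(x\mid a)}{h}s(x)\,dx$. Implementation: a contract $s$ implements $(a,u)$ if $(a,s)$ satisfies IC, IR and LL and $u=E^A(a,s)$ ($\ge u_0$). A pair is implementable if some contract implements it; the implementable set $\mathcal{I}$ is the set of all implementable pairs. *)

theory Defs
  imports "HOL-Analysis.Analysis"
begin

definition supp :: "(real \<Rightarrow> real) \<Rightarrow> ereal \<Rightarrow> real \<Rightarrow> real set" where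
  "supp L xbar a = {x. L a < x \<and> ereal x \<le> xbar}"

definition cdf :: "(real \<Rightarrow> real) \<Rightarrow> (real \<Rightarrow> real \<Rightarrow> real) \<Rightarrow> real \<Rightarrow> real \<Rightarrow> real" where
  "cdf L f x a = set_lebesgue_integral lborel {L a..x} (\<lambda>y. f y a)"

definition mean :: "(real \<Rightarrow> real) \<Rightarrow> ereal \<Rightarrow> (real \<Rightarrow> real \<Rightarrow> real) \<Rightarrow> real \<Rightarrow> real" where
  "mean L xbar f a = set_lebesgue_integral lborel (supp L xbar a) (\<lambda>x. x * f x a)"

definition pay :: "(real \<Rightarrow> real) \<Rightarrow> ereal \<Rightarrow> (real \<Rightarrow> real \<Rightarrow> real) \<Rightarrow> (real \<Rightarrow> real) \<Rightarrow> real \<Rightarrow> ereal" where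
  "pay L xbar f s a =
     enn2ereal (\<integral>\<^sup>+ x. indicator (supp L xbar a) x * ennreal (s x * f x a) \<partial>lborel)"

definition EA :: "(real \<Rightarrow> real) \<Rightarrow> ereal \<Rightarrow> (real \<Rightarrow> real \<Rightarrow> real) \<Rightarrow> (real \<Rightarrow> real)
                   \<Rightarrow> (real \<Rightarrow> real) \<Rightarrow> real \<Rightarrow> ereal" where
  "EA L xbar f c s a = pay L xbar f s a - ereal (c a)"

definition EP :: "(real \<Rightarrow> real) \<Rightarrow> ereal \<Rightarrow> (real \<Rightarrow> real \<Rightarrow> real) \<Rightarrow> (real \<Rightarrow> real) \<Rightarrow> real \<Rightarrow> ereal" where
  "EP L xbar f s a = ereal (mean L xbar f a) - pay L xbar f s a"

definition contract :: "(real \<Rightarrow> real) \<Rightarrow> bool" where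
  "contract s \<longleftrightarrow> s \<in> borel_measurable borel \<and> (\<forall>x\<ge>0. 0 \<le> s x)"

definition IC :: "(real \<Rightarrow> real) \<Rightarrow> ereal \<Rightarrow> (real \<Rightarrow> real \<Rightarrow> real) \<Rightarrow> (real \<Rightarrow> real)
                   \<Rightarrow> (real \<Rightarrow> real) \<Rightarrow> real \<Rightarrow> bool" where
  "IC L xbar f c s a \<longleftrightarrow> 0 \<le> a \<and> (\<forall>b\<ge>0. EA L xbar f c s b \<le> EA L xbar f c s a)"

definition IR :: "(real \<Rightarrow> real) \<Rightarrow> ereal \<Rightarrow> (real \<Rightarrow> real \<Rightarrow> real) \<Rightarrow> (real \<Rightarrow> real) \<Rightarrow> real
                   \<Rightarrow> (real \<Rightarrow> real) \<Rightarrow> real \<Rightarrow> bool" where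
  "IR L xbar f c u0 s a \<longleftrightarrow> ereal u0 \<le> EA L xbar f c s a"

definition feasible :: "(real \<Rightarrow> real) \<Rightarrow> ereal \<Rightarrow> (real \<Rightarrow> real \<Rightarrow> real) \<Rightarrow> (real \<Rightarrow> real) \<Rightarrow> real
                   \<Rightarrow> (real \<Rightarrow> real) \<Rightarrow> real \<Rightarrow> bool" where
  "feasible L xbar f c u0 s a \<longleftrightarrow>
     contract s \<and> IC L xbar f c s a \<and> IR L xbar f c u0 s a"

definition implements :: "(real \<Rightarrow> real) \<Rightarrow> ereal \<Rightarrow> (real \<Rightarrow> real \<Rightarrow> real) \<Rightarrow> (real \<Rightarrow> real) \<Rightarrow> real
                   \<Rightarrow> (real \<Rightarrow> real) \<Rightarrow> real \<Rightarrow> real \<Rightarrow> bool" where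
  "implements L xbar f c u0 s a u \<longleftrightarrow>
     feasible L xbar f c u0 s a \<and> EA L xbar f c s a = ereal u"

definition implementable_set :: "(real \<Rightarrow> real) \<Rightarrow> ereal \<Rightarrow> (real \<Rightarrow> real \<Rightarrow> real) \<Rightarrow> (real \<Rightarrow> real)
                   \<Rightarrow> real \<Rightarrow> (real \<times> real) set" where
  "implementable_set L xbar f c u0 = {(a, u). \<exists>s. implements L xbar f c u0 s a u}"

definition OP_optimal :: "(real \<Rightarrow> real) \<Rightarrow> ereal \<Rightarrow> (real \<Rightarrow> real \<Rightarrow> real) \<Rightarrow> (real \<Rightarrow> real) \<Rightarrow> real
                   \<Rightarrow> (real \<Rightarrow> real) \<Rightarrow> real \<Rightarrow> bool" where
  "OP_optimal L xbar f c u0 s a \<longleftrightarrow>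
     feasible L xbar f c u0 s a \<and>
     (\<forall>s' a'. feasible L xbar f c u0 s' a' \<longrightarrow> EP L xbar f s' a' \<le> EP L xbar f s a)"

text \<open>The relaxed set J; fa is the partial derivative of f in a, cd = c'.\<close>
definition Jset :: "(real \<Rightarrow> real) \<Rightarrow> ereal \<Rightarrow> (real \<Rightarrow> real \<Rightarrow> real) \<Rightarrow> (real \<Rightarrow> real \<Rightarrow> real)
                   \<Rightarrow> (real \<Rightarrow> real) \<Rightarrow> (real \<Rightarrow> real) \<Rightarrow> real \<Rightarrow> (real \<times> real) set" where
  "Jset L xbar f fa c cd u0 =
     {(a, u). 0 < a \<and> u0 \<le> u \<and>
        ereal (cd a / (c a + u)) \<le> (SUP x\<in>supp L xbar a. ereal (fa x a / f x a))}
     \<union> {(0, u) | u. u0 \<le> u}"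

end

theory Submission
  imports Defs
begin


lemma supp_borel: "supp L xbar a \<in> sets borel"
proof -
  have "supp L xbar a = {L a<..} \<inter> {x. ereal x \<le> xbar}" by (auto simp: supp_def)
  moreover have "{x. ereal x \<le> xbar} \<in> sets borel"
    by (cases xbar) (auto simp: atMost_def[symmetric])
  ultimately show ?thesis by simp
qed

lemma supp_anti: "L b \<le> L a \<Longrightarrow> supp L xbar a \<subseteq> supp L xbar b"
  by (auto simp: supp_def)

lemma nn_set:
  fixes h :: "real \<Rightarrow> real"
  assumes hm: "h \<in> borel_measurable borel" and T: "T \<in> sets borel"
    and nn: "\<forall>x\<in>T. 0 \<le> h x"
    and fin: "(\<integral>\<^sup>+x. indicator T x * ennreal (h x) \<partial>lborel) < \<infinity>"
  shows "set_integrable lborel T h \<and>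
    (\<integral>\<^sup>+x. indicator T x * ennreal (h x) \<partial>lborel) = ennreal (set_lebesgue_integral lborel T h)
    \<and> 0 \<le> set_lebesgue_integral lborel T h"
proof -
  let ?g = "\<lambda>x. indicator T x *\<^sub>R h x"
  have eq: "(\<integral>\<^sup>+x. indicator T x * ennreal (h x) \<partial>lborel) = (\<integral>\<^sup>+x. ennreal (?g x) \<partial>lborel)"
    by (intro nn_integral_cong) (auto simp: indicator_def)
  have gm: "?g \<in> borel_measurable lborel" using hm T by measurable
  have gnn: "AE x in lborel. 0 \<le> ?g x" using nn by (auto simp: indicator_def)
  have int: "integrable lborel ?g"
    using integrableI_nonneg[OF gm gnn] fin eq by simp
  have "0 \<le> integral\<^sup>L lborel ?g" by (rule integral_nonneg_AE[OF gnn])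
  then show ?thesis
    using nn_integral_eq_integral[OF int gnn] eq int
    by (simp add: set_integrable_def set_lebesgue_integral_def)
qed

lemma part1:
  fixes L :: "real \<Rightarrow> real" and xbar :: ereal
    and f fa :: "real \<Rightarrow> real \<Rightarrow> real"
    and c cd g :: "real \<Rightarrow> real" and u0 :: real
  assumes L_range: "\<forall>a\<ge>0. 0 \<le> L a \<and> ereal (L a) < xbar"
    and L_mono: "mono_on {0..} L"
    and c_deriv: "\<forall>a\<ge>0. (c has_real_derivative cd a) (at a within {0..})"
    and cd_pos: "\<forall>a\<ge>0. 0 < cd a"
    and cpos: "\<forall>a>0. 0 < c a"
    and f_meas: "\<forall>a\<ge>0. (\<lambda>x. f x a) \<in> borel_measurable borel"
    and f_pos: "\<forall>a\<ge>0. \<forall>x\<in>supp L xbar a. 0 < f x a"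
    and gdef: "\<forall>a>0. (SUP x\<in>supp L xbar a. ereal (fa x a / f x a)) = ereal (g a)"
    and SA_iv: "\<forall>s a. contract s \<longrightarrow> 0 < a \<longrightarrow> pay L xbar f s a < \<infinity> \<longrightarrow>
                  ((\<lambda>h. set_lebesgue_integral lborel (supp L xbar a)
                           (\<lambda>x. (f x (a + h) - f x a) / h * s x))
                   \<longlongrightarrow> set_lebesgue_integral lborel (supp L xbar a) (\<lambda>x. fa x a * s x))
                  (at_left 0)"
    and u0_nonneg: "0 \<le> u0"
  shows "implementable_set L xbar f c u0 \<subseteq> Jset L xbar f fa c cd u0"
proof
  fix p assume "p \<in> implementable_set L xbar f c u0"
  then obtain a u s where p: "p = (a, u)" and impl: "implements L xbar f c u0 s a u"
    by (auto simp: implementable_set_def)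
  have con: "contract s" and a0: "0 \<le> a" and ic: "\<forall>b\<ge>0. EA L xbar f c s b \<le> EA L xbar f c s a"
    and ir: "ereal u0 \<le> EA L xbar f c s a" and eau: "EA L xbar f c s a = ereal u"
    using impl by (auto simp: implements_def feasible_def IC_def IR_def)
  have u0u: "u0 \<le> u" using ir eau by simp
  show "p \<in> Jset L xbar f fa c cd u0"
  proof (cases "a = 0")
    case True
    then show ?thesis using p u0u by (auto simp: Jset_def)
  next
    case False
    with a0 have apos: "0 < a" by simp
    have sm: "s \<in> borel_measurable borel" and snn: "\<forall>x\<ge>0. 0 \<le> s x"
      using con by (auto simp: contract_def)
    define S where "S = supp L xbar a"
    define N where "N b = (\<integral>\<^sup>+x. indicator (supp L xbar b) x * ennreal (s x * f x b) \<partial>lborel)" for b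
    define P where "P b = set_lebesgue_integral lborel (supp L xbar b) (\<lambda>x. s x * f x b)" for b
    have hnn: "\<forall>x\<in>supp L xbar b. 0 \<le> s x * f x b" if "0 \<le> b" for b
    proof
      fix x assume "x \<in> supp L xbar b"
      then have "L b < x" by (auto simp: supp_def)
      then have "0 \<le> x" using L_range that by force
      then show "0 \<le> s x * f x b" using snn f_pos that \<open>x \<in> supp L xbar b\<close>
        by (metis less_le mult_nonneg_nonneg)
    qed
    have hm: "(\<lambda>x. s x * f x b) \<in> borel_measurable borel" if "0 \<le> b" for b
    proof -
      have "(\<lambda>x. f x b) \<in> borel_measurable borel" using f_meas that by auto
      then show ?thesis using sm by measurable
    qed
    have fin: "set_integrable lborel (supp L xbar b) (\<lambda>x. s x * f x b) \<and> pay L xbar f s b = ereal (P b)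
        \<and> 0 \<le> P b \<and> P b - c b \<le> u \<and> N b = ennreal (P b)" if "0 \<le> b" for b
    proof -
      have le: "pay L xbar f s b - ereal (c b) \<le> ereal u"
        using ic that eau by (auto simp: EA_def)
      have "N b \<noteq> \<infinity>"
      proof
        assume "N b = \<infinity>"
        then have "pay L xbar f s b = \<infinity>" by (simp add: pay_def N_def)
        with le show False by simp
      qed
      then have "N b < \<infinity>" by (simp add: less_top)
      from nn_set[OF hm[OF that] supp_borel hnn[OF that] this[unfolded N_def]]
      have *: "set_integrable lborel (supp L xbar b) (\<lambda>x. s x * f x b)"
        "N b = ennreal (P b)" "0 \<le> P b" by (auto simp: N_def P_def)
      then have "pay L xbar f s b = ereal (P b)" by (simp add: pay_def N_def[symmetric])
      with le * show ?thesis by simp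
    qed
    have Pa: "P a - c a = u"
      using fin[OF a0] eau by (auto simp: EA_def)
    have paya: "pay L xbar f s a < \<infinity>" using fin[OF a0] by simp
    have sub: "set_integrable lborel S (\<lambda>x. s x * f x b) \<and>
        set_lebesgue_integral lborel S (\<lambda>x. s x * f x b) \<le> P b" if "0 \<le> b" "b \<le> a" for b
    proof -
      have Lba: "L b \<le> L a" using L_mono that by (auto intro: mono_onD)
      have SS: "S \<subseteq> supp L xbar b" unfolding S_def using Lba by (rule supp_anti)
      have "(\<integral>\<^sup>+x. indicator S x * ennreal (s x * f x b) \<partial>lborel) \<le> N b"
        unfolding N_def using SS
        by (intro nn_integral_mono) (auto simp: indicator_def)
      also have "N b = ennreal (P b)"
        using fin[OF that(1)] by blast
      finally have le: "(\<integral>\<^sup>+x. indicator S x * ennreal (s x * f x b) \<partial>lborel) \<le> ennreal (P b)" .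
      then have lt: "(\<integral>\<^sup>+x. indicator S x * ennreal (s x * f x b) \<partial>lborel) < \<infinity>"
        using le_less_trans by fastforce
      have hS: "\<forall>x\<in>S. 0 \<le> s x * f x b" using SS hnn[OF that(1)] by blast
      have SB: "S \<in> sets borel" unfolding S_def by (rule supp_borel)
      from nn_set[OF hm[OF that(1)] SB hS lt] le fin[OF that(1)]
      show ?thesis by (auto simp: ennreal_le_iff)
    qed
    have SPa: "set_lebesgue_integral lborel S (\<lambda>x. s x * f x a) = P a"
      unfolding S_def P_def ..
    define Q where "Q h = set_lebesgue_integral lborel S (\<lambda>x. (f x (a + h) - f x a) / h * s x)" for h
    have Qeq: "Q h = (set_lebesgue_integral lborel S (\<lambda>x. s x * f x (a + h)) - P a) / h"
      if "-a < h" "h < 0" for h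
    proof -
      have i1: "set_integrable lborel S (\<lambda>x. s x * f x (a + h))" using sub[of "a+h"] that by simp
      have i2: "set_integrable lborel S (\<lambda>x. s x * f x a)" using sub[of a] a0 by simp
      have "(\<lambda>x. indicator S x *\<^sub>R ((f x (a + h) - f x a) / h * s x)) =
         (\<lambda>x. (indicator S x *\<^sub>R (s x * f x (a + h)) - indicator S x *\<^sub>R (s x * f x a)) / h)"
        by (auto simp: fun_eq_iff algebra_simps diff_divide_distrib)
      then have "Q h = integral\<^sup>L lborel (\<lambda>x. (indicator S x *\<^sub>R (s x * f x (a + h)) - indicator S x *\<^sub>R (s x * f x a)) / h)"
        unfolding Q_def set_lebesgue_integral_def by (rule arg_cong)
      also have "\<dots> = integral\<^sup>L lborel (\<lambda>x. indicator S x *\<^sub>R (s x * f x (a + h)) - indicator S x *\<^sub>R (s x * f x a)) / h"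
        by (rule integral_divide_zero)
      also have "\<dots> = (set_lebesgue_integral lborel S (\<lambda>x. s x * f x (a + h)) - P a) / h"
        using i1 i2 SPa by (simp add: set_integrable_def set_lebesgue_integral_def)
      finally show ?thesis .
    qed
    have Qge: "(c (a + h) - c a) / h \<le> Q h" if "-a < h" "h < 0" for h
    proof -
      have "set_lebesgue_integral lborel S (\<lambda>x. s x * f x (a + h)) \<le> P (a + h)"
        using sub[of "a+h"] that by simp
      moreover have "P (a + h) - c (a + h) \<le> u" using fin[of "a+h"] that by simp
      ultimately have "set_lebesgue_integral lborel S (\<lambda>x. s x * f x (a + h)) - P a \<le> c (a + h) - c a"
        using Pa by simp
      then show ?thesis using Qeq[OF that] that by (simp add: divide_right_mono_neg)
    qed
    have Qlim: "(Q \<longlongrightarrow> set_lebesgue_integral lborel S (\<lambda>x. fa x a * s x)) (at_left 0)"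
      using SA_iv con apos paya unfolding Q_def S_def by blast
    have "(c has_real_derivative cd a) (at a)"
    proof -
      have "a \<in> interior {0..}" using apos by (simp add: interior_Ici)
      then show ?thesis using c_deriv a0 at_within_interior by metis
    qed
    then have "((\<lambda>h. (c (a + h) - c a) / h) \<longlongrightarrow> cd a) (at 0)" by (simp add: DERIV_def)
    then have clim: "((\<lambda>h. (c (a + h) - c a) / h) \<longlongrightarrow> cd a) (at_left 0)"
      by (simp add: filterlim_at_split)
    have ev: "eventually (\<lambda>h. (c (a + h) - c a) / h \<le> Q h) (at_left 0)"
      using eventually_at_left_real[of "-a" 0] apos
      by (auto elim!: eventually_mono intro: Qge)
    have cdle: "cd a \<le> set_lebesgue_integral lborel S (\<lambda>x. fa x a * s x)"
      by (rule tendsto_le[OF _ Qlim clim ev]) simp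
    have cIF: "cd a \<le> g a * P a"
    proof (cases "set_integrable lborel S (\<lambda>x. fa x a * s x)")
      case True
      have "set_lebesgue_integral lborel S (\<lambda>x. fa x a * s x) \<le>
            set_lebesgue_integral lborel S (\<lambda>x. g a * (s x * f x a))"
      proof (rule set_integral_mono[OF True])
        show "set_integrable lborel S (\<lambda>x. g a * (s x * f x a))"
          using sub[of a] a0 by auto
        fix x assume xS: "x \<in> S"
        have "ereal (fa x a / f x a) \<le> (SUP x\<in>supp L xbar a. ereal (fa x a / f x a))"
          using xS unfolding S_def by (rule SUP_upper)
        then have r: "fa x a / f x a \<le> g a" using gdef apos by simp
        have fpos: "0 < f x a" using f_pos a0 xS S_def by auto
        have sx: "0 \<le> s x * f x a" using hnn[OF a0] xS S_def by auto
        have "fa x a * s x = (fa x a / f x a) * (s x * f x a)" using fpos by simp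
        also have "\<dots> \<le> g a * (s x * f x a)" by (rule mult_right_mono[OF r sx])
        finally show "fa x a * s x \<le> g a * (s x * f x a)" .
      qed
      then show ?thesis using cdle SPa by simp
    next
      case False
      then have "set_lebesgue_integral lborel S (\<lambda>x. fa x a * s x) = 0"
        by (simp add: set_integrable_def set_lebesgue_integral_def not_integrable_integral_eq)
      with cdle cd_pos a0 have False by force
      then show ?thesis ..
    qed
    have cupos: "0 < c a + u" using cpos apos u0u u0_nonneg by force
    have "cd a / (c a + u) \<le> g a"
    proof -
      have "P a = c a + u" using Pa by simp
      then show ?thesis using cIF cupos by (simp add: pos_divide_le_eq mult.commute)
    qed
    then show ?thesis using p apos u0u gdef by (auto simp: Jset_def)
  qed
qed



lemma exist_max:
  fixes m c cd g :: "real \<Rightarrow> real" and J :: "(real \<times> real) set" and u0 :: real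
  assumes mc: "continuous_on {0..} m" and cc: "continuous_on {0..} c"
    and cdc: "continuous_on {0..} cd" and gc: "continuous_on {0<..} g"
    and cdpos: "\<forall>a\<ge>0. 0 < cd a"
    and lim: "filterlim (\<lambda>a. m a - c a) at_bot at_top"
    and J1: "\<forall>a u. (a, u) \<in> J \<longrightarrow> 0 < a \<longrightarrow> 0 < g a \<and> cd a / g a - c a \<le> u \<and> u0 \<le> u"
    and J0: "\<forall>a u. (a, u) \<in> J \<longrightarrow> 0 \<le> a \<and> u0 \<le> u"
    and J2: "\<forall>a. 0 < a \<longrightarrow> 0 < g a \<longrightarrow> (a, max u0 (cd a / g a - c a)) \<in> J"
    and J3: "(0, u0) \<in> J"
  shows "\<exists>(a, u)\<in>J. \<forall>(a', u')\<in>J. m a' - c a' - u' \<le> m a - c a - u"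
proof -
  define \<phi> where "\<phi> a = m a - c a - max u0 (cd a / g a - c a)" for a
  define v0 where "v0 = m 0 - c 0 - u0"
  have phi1: "\<phi> a \<le> m a - c a - u0" for a unfolding \<phi>_def by simp
  have phi2: "\<phi> a \<le> m a - cd a / g a" for a unfolding \<phi>_def by simp
  have bnd: "m a - c a - u \<le> \<phi> a" if "(a, u) \<in> J" "0 < a" for a u
    using J1 that unfolding \<phi>_def by force
  have bnd0: "m 0 - c 0 - u \<le> v0" if "(0, u) \<in> J" for u
    using J0 that unfolding v0_def by force
  show ?thesis
  proof (cases "\<forall>a>0. 0 < g a \<longrightarrow> \<phi> a \<le> v0")
    case True
    show ?thesis
    proof (rule bexI[OF _ J3], clarify)
      fix a' u' assume a'J: "(a', u') \<in> J"
      show "m a' - c a' - u' \<le> m 0 - c 0 - u0"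
      proof (cases "a' = 0")
        case True then show ?thesis using bnd0 a'J v0_def by auto
      next
        case False
        then have "0 < a'" using J0 a'J by force
        then show ?thesis using bnd[OF a'J] True J1 a'J v0_def by force
      qed
    qed
  next
    case False
    then obtain a1 where a1: "0 < a1" "0 < g a1" "v0 < \<phi> a1" by force
    define t where "t = \<phi> a1 + u0"
    have "eventually (\<lambda>a. m a - c a \<le> t - 1) at_top"
      using lim by (simp add: filterlim_at_bot)
    then obtain M0 where M0: "\<forall>a\<ge>M0. m a - c a \<le> t - 1"
      by (auto simp: eventually_at_top_linorder)
    define M where "M = max M0 (a1 + 1)"
    have "continuous_on {0..} (\<lambda>a. m a - c a)" using mc cc by (intro continuous_intros)
    then have "((\<lambda>a. m a - c a) \<longlongrightarrow> m 0 - c 0) (at 0 within {0..})"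
      by (simp add: continuous_on_eq_continuous_within continuous_within)
    moreover have "m 0 - c 0 < t" using a1 unfolding t_def v0_def by simp
    ultimately have "eventually (\<lambda>a. m a - c a < t) (at 0 within {0..})"
      by (rule order_tendstoD(2))
    then obtain d where d: "0 < d" "\<forall>x\<in>{0..}. x \<noteq> 0 \<and> dist x 0 < d \<longrightarrow> m x - c x < t"
      by (auto simp: eventually_at)
    define \<delta> where "\<delta> = min (d/2) a1"
    have dpos: "0 < \<delta>" "\<delta> \<le> a1" "\<delta> \<le> M" using d a1 unfolding \<delta>_def M_def by auto
    have low: "m a - c a < t" if "0 < a" "a < \<delta>" for a
      using d(2) that unfolding \<delta>_def by auto
    have sub: "{\<delta>..M} \<subseteq> {0..}" "{\<delta>..M} \<subseteq> {0<..}" using dpos by auto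
    obtain aB where aB: "aB \<in> {\<delta>..M}" "\<forall>y\<in>{\<delta>..M}. m y \<le> m aB"
      using continuous_attains_sup[OF compact_Icc _ continuous_on_subset[OF mc sub(1)]] dpos by auto
    obtain aC where aC: "aC \<in> {\<delta>..M}" "\<forall>y\<in>{\<delta>..M}. cd aC \<le> cd y"
      using continuous_attains_inf[OF compact_Icc _ continuous_on_subset[OF cdc sub(1)]] dpos by auto
    define B where "B = m aB"
    define mn where "mn = cd aC"
    have mnpos: "0 < mn" using cdpos aC dpos unfolding mn_def by auto
    define \<epsilon> where "\<epsilon> = mn / (\<bar>B - \<phi> a1\<bar> + 1)"
    have epos: "0 < \<epsilon>" using mnpos unfolding \<epsilon>_def by simp
    have key: "\<phi> a < \<phi> a1" if "a \<in> {\<delta>..M}" "0 < g a" "g a < \<epsilon>" for a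
    proof -
      have "mn / \<epsilon> < mn / g a"
        using divide_strict_left_mono[OF that(3) mnpos] that epos by simp
      moreover have "mn / \<epsilon> = \<bar>B - \<phi> a1\<bar> + 1" using mnpos unfolding \<epsilon>_def by simp
      moreover have "mn / g a \<le> cd a / g a"
        using aC that unfolding mn_def by (simp add: divide_right_mono)
      moreover have "m a \<le> B" using aB that unfolding B_def by simp
      ultimately show ?thesis using phi2[of a] by linarith
    qed
    define K where "K = {\<delta>..M} \<inter> g -` {\<epsilon>..}"
    have Kc: "closed K" unfolding K_def
      by (rule continuous_closed_preimage[OF continuous_on_subset[OF gc sub(2)]]) auto
    have Kcomp: "compact K"
    proof -
      have "compact ({\<delta>..M} \<inter> K)" using Kc by (intro compact_Int_closed compact_Icc)
      moreover have "{\<delta>..M} \<inter> K = K" unfolding K_def by auto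
      ultimately show ?thesis by simp
    qed
    have a1K: "a1 \<in> K"
    proof -
      have "a1 \<in> {\<delta>..M}" using dpos unfolding M_def by auto
      moreover have "\<epsilon> \<le> g a1" using key[of a1] calculation a1 by force
      ultimately show ?thesis unfolding K_def by auto
    qed
    have gK: "\<forall>x\<in>K. g x \<noteq> 0" using epos unfolding K_def by force
    have KS: "K \<subseteq> {0..}" "K \<subseteq> {0<..}" using sub unfolding K_def by auto
    have phic: "continuous_on K \<phi>"
      unfolding \<phi>_def
      by (intro continuous_intros continuous_on_subset[OF mc KS(1)] continuous_on_subset[OF cc KS(1)]
          continuous_on_subset[OF cdc KS(1)] continuous_on_subset[OF gc KS(2)] gK)
    obtain as where as: "as \<in> K" "\<forall>y\<in>K. \<phi> y \<le> \<phi> as"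
      using continuous_attains_sup[OF Kcomp _ phic] a1K by auto
    have a1as: "\<phi> a1 \<le> \<phi> as" using as a1K by simp
    have asJ: "(as, max u0 (cd as / g as - c as)) \<in> J"
      using J2 as epos dpos unfolding K_def by force
    show ?thesis
    proof (rule bexI[OF _ asJ], clarify)
      fix a' u' assume a'J: "(a', u') \<in> J"
      have "m a' - c a' - u' \<le> \<phi> as"
      proof (cases "a' = 0")
        case True then show ?thesis using bnd0 a'J a1 a1as by force
      next
        case False
        then have a'pos: "0 < a'" using J0 a'J by force
        have ga': "0 < g a'" using J1 a'J a'pos by blast
        have "\<phi> a' \<le> \<phi> as"
        proof (cases "a' < \<delta>")
          case True
          then show ?thesis using low[OF a'pos True] phi1[of a'] a1as unfolding t_def by linarith
        next
          case nd: False
          show ?thesis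
          proof (cases "M < a'")
            case True
            then have "m a' - c a' \<le> t - 1" using M0 unfolding M_def by auto
            then show ?thesis using phi1[of a'] a1as unfolding t_def by linarith
          next
            case False
            then have a'I: "a' \<in> {\<delta>..M}" using nd by auto
            show ?thesis
            proof (cases "g a' < \<epsilon>")
              case True
              then show ?thesis using key[OF a'I ga'] a1as by linarith
            next
              case False
              then have "a' \<in> K" using a'I unfolding K_def by auto
              then show ?thesis using as by blast
            qed
          qed
        qed
        then show ?thesis using bnd[OF a'J a'pos] by linarith
      qed
      then show "m a' - c a' - u' \<le> m as - c as - max u0 (cd as / g as - c as)"
        unfolding \<phi>_def .
    qed
  qed
qed



theorem theorem1:
  fixes L L' :: "real \<Rightarrow> real" and xbar :: ereal
    and f fa Fa :: "real \<Rightarrow> real \<Rightarrow> real"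
    and c cd cdd :: "real \<Rightarrow> real" and u0 :: real
  assumes xbar_pos: "0 < xbar"
    and L_range: "\<forall>a\<ge>0. 0 \<le> L a \<and> ereal (L a) < xbar"
    and L_mono: "mono_on {0..} L"
    and L_C1: "\<forall>a>0. (L has_real_derivative L' a) (at a)" "continuous_on {0<..} L'"
    and c_nonneg: "\<forall>a\<ge>0. 0 \<le> c a"
    and c_deriv: "\<forall>a\<ge>0. (c has_real_derivative cd a) (at a within {0..})"
    and cd_deriv: "\<forall>a\<ge>0. (cd has_real_derivative cdd a) (at a within {0..})"
    and cd_pos: "\<forall>a\<ge>0. 0 < cd a"
    and cdd_nonneg: "\<forall>a\<ge>0. 0 \<le> cdd a"
    and f_meas: "\<forall>a\<ge>0. (\<lambda>x. f x a) \<in> borel_measurable borel"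
    and f_pos: "\<forall>a\<ge>0. \<forall>x\<in>supp L xbar a. 0 < f x a"
    and f_density: "\<forall>a\<ge>0. set_integrable lborel (supp L xbar a) (\<lambda>x. f x a)
                        \<and> set_lebesgue_integral lborel (supp L xbar a) (\<lambda>x. f x a) = 1"
    and f_diff: "\<forall>a>0. \<forall>x\<in>supp L xbar a. ((\<lambda>b. f x b) has_real_derivative fa x a) (at a)"
    and F_diff: "\<forall>a>0. \<forall>x\<in>supp L xbar a. ((\<lambda>b. cdf L f x b) has_real_derivative Fa x a) (at a)"
    and fa_cont: "continuous_on {(x, a). 0 < a \<and> x \<in> supp L xbar a} (\<lambda>(x, a). fa x a)"
    and Fa_cont: "continuous_on {(x, a). 0 < a \<and> x \<in> supp L xbar a} (\<lambda>(x, a). Fa x a)"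
    and Fa_neg: "\<forall>a>0. \<forall>x\<in>supp L xbar a. Fa x a < 0"
    and SA_i: "\<forall>a\<ge>0. set_integrable lborel (supp L xbar a) (\<lambda>x. x * f x a)"
              "continuous_on {0..} (mean L xbar f)"
    and SA_ii: "filterlim (\<lambda>a. mean L xbar f a - c a) at_bot at_top"
    and SA_iii: "\<exists>g. continuous_on {0<..} g \<and>
                   (\<forall>a>0. (SUP x\<in>supp L xbar a. ereal (fa x a / f x a)) = ereal (g a))"
    and SA_iv: "\<forall>s a. contract s \<longrightarrow> 0 < a \<longrightarrow> pay L xbar f s a < \<infinity> \<longrightarrow>
                  ((\<lambda>h. set_lebesgue_integral lborel (supp L xbar a)
                           (\<lambda>x. (f x (a + h) - f x a) / h * s x))
                   \<longlongrightarrow> set_lebesgue_integral lborel (supp L xbar a) (\<lambda>x. fa x a * s x))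
                  (at_left 0)"
    and u0_nonneg: "0 \<le> u0"
  shows "implementable_set L xbar f c u0 \<subseteq> Jset L xbar f fa c cd u0
    \<and> (\<exists>(a, u)\<in>Jset L xbar f fa c cd u0. \<forall>(a', u')\<in>Jset L xbar f fa c cd u0.
          mean L xbar f a' - c a' - u' \<le> mean L xbar f a - c a - u)
    \<and> (\<forall>a u. (a, u) \<in> Jset L xbar f fa c cd u0 \<longrightarrow>
          (\<forall>(a', u')\<in>Jset L xbar f fa c cd u0.
              mean L xbar f a' - c a' - u' \<le> mean L xbar f a - c a - u) \<longrightarrow>
          (\<forall>s. implements L xbar f c u0 s a u \<longrightarrow> OP_optimal L xbar f c u0 s a))"
  proof -
  obtain g where gc: "continuous_on {0<..} g"
    and gdef: "\<forall>a>0. (SUP x\<in>supp L xbar a. ereal (fa x a / f x a)) = ereal (g a)"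
    using SA_iii by blast
  have cc: "continuous_on {0..} c"
    unfolding continuous_on_eq_continuous_within using c_deriv DERIV_continuous by blast
  have cdc: "continuous_on {0..} cd"
    unfolding continuous_on_eq_continuous_within using cd_deriv DERIV_continuous by blast
  have cpos: "\<forall>a>0. 0 < c a"
  proof (intro allI impI)
    fix a :: real assume a: "0 < a"
    have "c 0 < c a"
    proof (rule DERIV_pos_imp_increasing_open[OF a])
      fix x :: real assume x: "0 < x" "x < a"
      have "x \<in> interior {0..}" using x by (simp add: interior_Ici)
      then have "(c has_real_derivative cd x) (at x)"
        using c_deriv x at_within_interior by (metis less_imp_le)
      then show "\<exists>y. (c has_real_derivative y) (at x) \<and> 0 < y" using cd_pos x by auto
    next
      show "continuous_on {0..a} c" using cc by (rule continuous_on_subset) auto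
    qed
    then show "0 < c a" using c_nonneg by force
  qed
  have P1: "implementable_set L xbar f c u0 \<subseteq> Jset L xbar f fa c cd u0"
    by (rule part1[OF L_range L_mono c_deriv cd_pos cpos f_meas f_pos gdef SA_iv u0_nonneg])
  let ?J = "Jset L xbar f fa c cd u0"
  have J0: "\<forall>a u. (a, u) \<in> ?J \<longrightarrow> 0 \<le> a \<and> u0 \<le> u"
    by (auto simp: Jset_def)
  have J1: "\<forall>a u. (a, u) \<in> ?J \<longrightarrow> 0 < a \<longrightarrow> 0 < g a \<and> cd a / g a - c a \<le> u \<and> u0 \<le> u"
  proof (intro allI impI)
    fix a u assume au: "(a, u) \<in> ?J" and a: "0 < a"
    then have u0u: "u0 \<le> u" and le: "cd a / (c a + u) \<le> g a"
      using gdef by (auto simp: Jset_def)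
    have cu: "0 < c a + u" using cpos a u0u u0_nonneg by force
    have "0 < cd a / (c a + u)" using cd_pos a cu by simp
    then have gp: "0 < g a" using le by linarith
    have "cd a \<le> g a * (c a + u)" using le cu by (simp add: pos_divide_le_eq mult.commute)
    then have "cd a / g a \<le> c a + u" using gp by (simp add: pos_divide_le_eq mult.commute)
    then show "0 < g a \<and> cd a / g a - c a \<le> u \<and> u0 \<le> u" using gp u0u by simp
  qed
  have J2: "\<forall>a. 0 < a \<longrightarrow> 0 < g a \<longrightarrow> (a, max u0 (cd a / g a - c a)) \<in> ?J"
  proof (intro allI impI)
    fix a assume a: "0 < a" and gp: "0 < g a"
    define U where "U = max u0 (cd a / g a - c a)"
    have "cd a / g a \<le> c a + U" unfolding U_def by simp
    then have *: "cd a \<le> g a * (c a + U)" using gp by (simp add: pos_divide_le_eq mult.commute)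
    have cu: "0 < c a + U" using cpos a u0_nonneg unfolding U_def by force
    have "cd a / (c a + U) \<le> g a" using * cu by (simp add: pos_divide_le_eq mult.commute)
    then show "(a, max u0 (cd a / g a - c a)) \<in> ?J"
      using a gdef unfolding U_def by (auto simp: Jset_def)
  qed
  have J3: "(0, u0) \<in> ?J" by (auto simp: Jset_def)
  have P2: "\<exists>(a, u)\<in>?J. \<forall>(a', u')\<in>?J.
          mean L xbar f a' - c a' - u' \<le> mean L xbar f a - c a - u"
    by (rule exist_max[OF SA_i(2) cc cdc gc cd_pos SA_ii J1 J0 J2 J3])
  have P3: "\<forall>a u. (a, u) \<in> ?J \<longrightarrow>
          (\<forall>(a', u')\<in>?J.
              mean L xbar f a' - c a' - u' \<le> mean L xbar f a - c a - u) \<longrightarrow>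
          (\<forall>s. implements L xbar f c u0 s a u \<longrightarrow> OP_optimal L xbar f c u0 s a)"
  proof (intro allI impI)
    fix a u s
    assume aJ: "(a, u) \<in> ?J"
      and mx: "\<forall>(a', u')\<in>?J. mean L xbar f a' - c a' - u' \<le> mean L xbar f a - c a - u"
      and im: "implements L xbar f c u0 s a u"
    have fs: "feasible L xbar f c u0 s a" using im by (simp add: implements_def)
    have "pay L xbar f s a - ereal (c a) = ereal u" using im by (simp add: implements_def EA_def)
    then have pa: "pay L xbar f s a = ereal (u + c a)"
      by (cases "pay L xbar f s a") (auto simp: algebra_simps)
    have EPa: "EP L xbar f s a = ereal (mean L xbar f a - c a - u)"
      using pa by (simp add: EP_def)
    show "OP_optimal L xbar f c u0 s a"
      unfolding OP_optimal_def
    proof (intro conjI fs allI impI)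
      fix s' a' assume fs': "feasible L xbar f c u0 s' a'"
      obtain N where N: "pay L xbar f s' a' = enn2ereal N" by (simp add: pay_def)
      show "EP L xbar f s' a' \<le> EP L xbar f s a"
      proof (cases N rule: ennreal_cases)
        case top
        then show ?thesis using N by (simp add: EP_def)
      next
        case (real p)
        then have pp: "pay L xbar f s' a' = ereal p" using N by simp
        have "implements L xbar f c u0 s' a' (p - c a')"
          using fs' pp by (simp add: implements_def EA_def)
        then have "(a', p - c a') \<in> ?J" using P1 by (auto simp: implementable_set_def)
        then have "mean L xbar f a' - c a' - (p - c a') \<le> mean L xbar f a - c a - u"
          using mx by blast
        then show ?thesis using pp EPa by (simp add: EP_def)
      qed
    qed
  qed
  show ?thesis using P1 P2 P3 by blast
qed

end
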